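(* Let $\mathbf{P}=(P,\le,\mathcal T)$ be a $2$-separated topological poset in which the clopen final segments together with the clopen initial segments generate (form a subbase for) the topology $\mathcal T$. Then $\mathbf{P}$ is reflexive if and only if for every closed final segment $B\subseteq P$ and every closed initial segment $C\subseteq P$ with $C<B$, there exists a clopen final segment $u$ such that $B\subseteq u$ and $C\cap u=\emptyset$.
   Context: A topological poset $(P,\le,\mathcal T)$ is a poset with a Hausdorff topology; it is $2$-separated if it admits a continuous order-embedding into a power of the two-element chain $\mathbf{O}=(\{0,1\},\le)$, $0<1$, with the product topology. Final (initial) segments are upward (downward) closed subsets. For $A,B\subseteq P$, $C<B$ means $x<y$ for all $x\in C$, $y\in B$. Let $\mathbf{L}=(\{0,1\},\wedge,\vee,0,1)$ be the two-element bounded distributive lattice. $\mathbf{P}^*$ is the set of continuous order-preserving maps $P\to\{0,1\}$ with the bounded-lattice structure (pointwise $\wedge,\vee$, constants $0,1$) and the product topology induced from $\mathbf{L}^P$; $\mathbf{P}^{**}$ is the set of continuous bounded-lattice homomorphisms $\mathbf{P}^*\to\mathbf{L}$. $\mathbf{P}$ is reflexive if the evaluation map $P\to\mathbf{P}^{**}$, $x\mapsto(f\mapsto f(x))$, is onto. *)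

theory Defs
  imports "HOL-Analysis.Analysis"
begin

definition poset_on :: "'a set \<Rightarrow> ('a \<Rightarrow> 'a \<Rightarrow> bool) \<Rightarrow> bool" where
  "poset_on P le \<longleftrightarrow>
     (\<forall>x\<in>P. le x x) \<and>
     (\<forall>x\<in>P. \<forall>y\<in>P. le x y \<and> le y x \<longrightarrow> x = y) \<and>
     (\<forall>x\<in>P. \<forall>y\<in>P. \<forall>z\<in>P. le x y \<and> le y z \<longrightarrow> le x z)"

definition topological_poset :: "'a topology \<Rightarrow> ('a \<Rightarrow> 'a \<Rightarrow> bool) \<Rightarrow> bool" where
  "topological_poset T le \<longleftrightarrow> Hausdorff_space T \<and> poset_on (topspace T) le"

definition final_segment :: "'a set \<Rightarrow> ('a \<Rightarrow> 'a \<Rightarrow> bool) \<Rightarrow> 'a set \<Rightarrow> bool" where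
  "final_segment P le U \<longleftrightarrow> U \<subseteq> P \<and> (\<forall>x\<in>U. \<forall>y\<in>P. le x y \<longrightarrow> y \<in> U)"

definition initial_segment :: "'a set \<Rightarrow> ('a \<Rightarrow> 'a \<Rightarrow> bool) \<Rightarrow> 'a set \<Rightarrow> bool" where
  "initial_segment P le U \<longleftrightarrow> U \<subseteq> P \<and> (\<forall>x\<in>U. \<forall>y\<in>P. le y x \<longrightarrow> y \<in> U)"

text \<open>The two-element chain O = ({0,1}, <=) is rendered as bool with False < True and the
  discrete topology. The index set ranges over
  sets of subsets of the carrier type, which is enough.\<close>

definition two_separated :: "'a topology \<Rightarrow> ('a \<Rightarrow> 'a \<Rightarrow> bool) \<Rightarrow> bool" where
  "two_separated T le \<longleftrightarrow>
     (\<exists>(I :: 'a set set) (e :: 'a \<Rightarrow> 'a set \<Rightarrow> bool).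
        continuous_map T (product_topology (\<lambda>_. discrete_topology (UNIV :: bool set)) I) e \<and>
        (\<forall>x\<in>topspace T. \<forall>y\<in>topspace T. le x y \<longleftrightarrow> (\<forall>i\<in>I. e x i \<le> e y i)))"

definition clopen_final :: "'a topology \<Rightarrow> ('a \<Rightarrow> 'a \<Rightarrow> bool) \<Rightarrow> 'a set \<Rightarrow> bool" where
  "clopen_final T le U \<longleftrightarrow> final_segment (topspace T) le U \<and> openin T U \<and> closedin T U"

definition clopen_initial :: "'a topology \<Rightarrow> ('a \<Rightarrow> 'a \<Rightarrow> bool) \<Rightarrow> 'a set \<Rightarrow> bool" where
  "clopen_initial T le U \<longleftrightarrow> initial_segment (topspace T) le U \<and> openin T U \<and> closedin T U"

abbreviation powL :: "'b set \<Rightarrow> ('b \<Rightarrow> bool) topology" where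
  "powL S \<equiv> product_topology (\<lambda>_. discrete_topology (UNIV :: bool set)) S"

definition dual_star :: "'a topology \<Rightarrow> ('a \<Rightarrow> 'a \<Rightarrow> bool) \<Rightarrow> ('a \<Rightarrow> bool) set" where
  "dual_star T le = {f. f \<in> extensional (topspace T) \<and>
      continuous_map T (discrete_topology (UNIV :: bool set)) f \<and>
      (\<forall>x\<in>topspace T. \<forall>y\<in>topspace T. le x y \<longrightarrow> f x \<le> f y)}"

definition dual_star_top :: "'a topology \<Rightarrow> ('a \<Rightarrow> 'a \<Rightarrow> bool) \<Rightarrow> ('a \<Rightarrow> bool) topology" where
  "dual_star_top T le = subtopology (powL (topspace T)) (dual_star T le)"

definition dual_star_star :: "'a topology \<Rightarrow> ('a \<Rightarrow> 'a \<Rightarrow> bool) \<Rightarrow> (('a \<Rightarrow> bool) \<Rightarrow> bool) set" where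
  "dual_star_star T le = (let P = topspace T; Ps = dual_star T le in
     {\<phi>. \<phi> \<in> extensional Ps \<and>
        continuous_map (dual_star_top T le) (discrete_topology (UNIV :: bool set)) \<phi> \<and>
        (\<forall>f\<in>Ps. \<forall>g\<in>Ps. \<phi> (\<lambda>x\<in>P. f x \<and> g x) = (\<phi> f \<and> \<phi> g)) \<and>
        (\<forall>f\<in>Ps. \<forall>g\<in>Ps. \<phi> (\<lambda>x\<in>P. f x \<or> g x) = (\<phi> f \<or> \<phi> g)) \<and>
        \<phi> (\<lambda>x\<in>P. False) = False \<and>
        \<phi> (\<lambda>x\<in>P. True) = True})"

definition evaluation :: "'a topology \<Rightarrow> ('a \<Rightarrow> 'a \<Rightarrow> bool) \<Rightarrow> 'a \<Rightarrow> (('a \<Rightarrow> bool) \<Rightarrow> bool)" where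
  "evaluation T le x = (\<lambda>f\<in>dual_star T le. f x)"

definition reflexive_tposet :: "'a topology \<Rightarrow> ('a \<Rightarrow> 'a \<Rightarrow> bool) \<Rightarrow> bool" where
  "reflexive_tposet T le \<longleftrightarrow> dual_star_star T le \<subseteq> evaluation T le ` topspace T"

end

theory Submission
  imports Defs
begin

abbreviation "cf T le u \<equiv> clopen_final T le u"
abbreviation "ci T le u \<equiv> clopen_initial T le u"

definition chr :: "'a set \<Rightarrow> 'a set \<Rightarrow> 'a \<Rightarrow> bool" where
  "chr P u = (\<lambda>x\<in>P. x \<in> u)"

lemma cf_sub: "cf T le u \<Longrightarrow> u \<subseteq> topspace T"
  by (simp add: clopen_final_def final_segment_def)

lemma cf_Int: "cf T le u \<Longrightarrow> cf T le v \<Longrightarrow> cf T le (u \<inter> v)"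
  unfolding clopen_final_def final_segment_def by (auto intro!: openin_Int closedin_Int)

lemma cf_Un: "cf T le u \<Longrightarrow> cf T le v \<Longrightarrow> cf T le (u \<union> v)"
  unfolding clopen_final_def final_segment_def by (auto intro!: openin_Un closedin_Un)

lemma ci_Int: "ci T le u \<Longrightarrow> ci T le v \<Longrightarrow> ci T le (u \<inter> v)"
  unfolding clopen_initial_def initial_segment_def by (auto intro!: openin_Int closedin_Int)

lemma cf_top: "cf T le (topspace T)"
  unfolding clopen_final_def final_segment_def by auto

lemma ci_top: "ci T le (topspace T)"
  unfolding clopen_initial_def initial_segment_def by auto

lemma cf_empty: "cf T le {}"
  unfolding clopen_final_def final_segment_def by auto

lemma cf_compl: "ci T le D \<Longrightarrow> cf T le (topspace T - D)"
  unfolding clopen_final_def final_segment_def clopen_initial_def initial_segment_def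
  by (auto intro!: openin_diff closedin_diff)

lemma cont_bool:
  assumes "openin T {x\<in>topspace T. f x}" "openin T {x\<in>topspace T. \<not> f x}"
  shows "continuous_map T (discrete_topology UNIV) f"
  unfolding continuous_map
proof (intro conjI allI impI)
  fix U :: "bool set"
  have "{x \<in> topspace T. f x \<in> U} =
     (if True \<in> U then {x\<in>topspace T. f x} else {}) \<union> (if False \<in> U then {x\<in>topspace T. \<not> f x} else {})"
    by (auto; metis (full_types))
  then show "openin T {x \<in> topspace T. f x \<in> U}" using assms by (auto intro!: openin_Un)
qed auto

lemma cont_boolD:
  assumes "continuous_map T (discrete_topology UNIV) f"
  shows "openin T {x\<in>topspace T. f x}" "openin T {x\<in>topspace T. \<not> f x}"
proof -
  have "openin T {x\<in>topspace T. f x \<in> {True}}"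
    by (rule openin_continuous_map_preimage[OF assms]) simp
  then show "openin T {x\<in>topspace T. f x}" by simp
  have "openin T {x\<in>topspace T. f x \<in> {False}}"
    by (rule openin_continuous_map_preimage[OF assms]) simp
  then show "openin T {x\<in>topspace T. \<not> f x}" by simp
qed

lemma chr_DS: "cf T le u \<Longrightarrow> chr (topspace T) u \<in> dual_star T le"
  unfolding dual_star_def
proof (intro CollectI conjI ballI impI)
  assume u: "cf T le u"
  show "chr (topspace T) u \<in> extensional (topspace T)" by (simp add: chr_def)
  have "{x\<in>topspace T. chr (topspace T) u x} = u" using cf_sub[OF u] by (auto simp: chr_def)
  moreover have "{x\<in>topspace T. \<not> chr (topspace T) u x} = topspace T - u" by (auto simp: chr_def)
  ultimately show "continuous_map T (discrete_topology UNIV) (chr (topspace T) u)"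
    using u by (intro cont_bool) (auto simp: clopen_final_def closedin_def)
  fix x y assume "x \<in> topspace T" "y \<in> topspace T" "le x y"
  then show "chr (topspace T) u x \<le> chr (topspace T) u y"
    using u by (auto simp: chr_def clopen_final_def final_segment_def)
qed

lemma DS_chr:
  assumes "f \<in> dual_star T le"
  shows "cf T le {x\<in>topspace T. f x}" "f = chr (topspace T) {x\<in>topspace T. f x}"
proof -
  have e: "f \<in> extensional (topspace T)" and c: "continuous_map T (discrete_topology UNIV) f"
    and m: "\<And>x y. x\<in>topspace T \<Longrightarrow> y\<in>topspace T \<Longrightarrow> le x y \<Longrightarrow> f x \<le> f y"
    using assms by (auto simp: dual_star_def)
  have "topspace T - {x\<in>topspace T. f x} = {x\<in>topspace T. \<not> f x}" by auto
  then show "cf T le {x\<in>topspace T. f x}"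
    using cont_boolD[OF c] m unfolding clopen_final_def final_segment_def closedin_def
    by (auto simp: le_bool_def)
  show "f = chr (topspace T) {x\<in>topspace T. f x}"
    using e by (auto simp: chr_def fun_eq_iff extensional_def)
qed

lemma chr_Int: "(\<lambda>x\<in>P. chr P u x \<and> chr P v x) = chr P (u \<inter> v)"
  by (auto simp: chr_def fun_eq_iff)
lemma chr_Un: "(\<lambda>x\<in>P. chr P u x \<or> chr P v x) = chr P (u \<union> v)"
  by (auto simp: chr_def fun_eq_iff)
lemma chr_empty: "(\<lambda>x\<in>P. False) = chr P {}"
  by (auto simp: chr_def fun_eq_iff)
lemma chr_top: "(\<lambda>x\<in>P. True) = chr P P"
  by (auto simp: chr_def fun_eq_iff)

lemma topspace_DS: "topspace (dual_star_top T le) = dual_star T le"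
  by (auto simp: dual_star_top_def dual_star_def PiE_def)


lemma le2:
  assumes ts: "two_separated T le" and xy: "x \<in> topspace T" "y \<in> topspace T"
    and H: "\<forall>v. cf T le v \<and> x \<in> v \<longrightarrow> y \<in> v"
  shows "le x y"
proof -
  obtain I and e :: "'a \<Rightarrow> 'a set \<Rightarrow> bool" where
    c: "continuous_map T (product_topology (\<lambda>_. discrete_topology (UNIV :: bool set)) I) e" and
    o: "\<forall>x\<in>topspace T. \<forall>y\<in>topspace T. le x y \<longleftrightarrow> (\<forall>i\<in>I. e x i \<le> e y i)"
    using ts unfolding two_separated_def by blast
  have "\<forall>i\<in>I. e x i \<le> e y i"
  proof
    fix i assume i: "i \<in> I"
    have ci: "continuous_map T (discrete_topology UNIV) (\<lambda>z. e z i)"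
      using continuous_map_compose[OF c continuous_map_product_projection[OF i]] by (simp add: o_def)
    let ?v = "{z\<in>topspace T. e z i}"
    have "topspace T - ?v = {z\<in>topspace T. \<not> e z i}" by auto
    then have "cf T le ?v"
      using cont_boolD[OF ci] o i unfolding clopen_final_def final_segment_def closedin_def
      by (auto simp: le_bool_def)
    then show "e x i \<le> e y i" using H xy by (auto simp: le_bool_def)
  qed
  then show ?thesis using o xy by blast
qed

lemma subbase:
  assumes T: "T = topology_generated_by {U. cf T le U \<or> ci T le U}"
    and W: "openin T W"
  shows "\<forall>x\<in>W. \<exists>u D. cf T le u \<and> ci T le D \<and> x \<in> u \<and> x \<in> D \<and> u \<inter> D \<subseteq> W"
proof -
  have "openin T = openin (topology_generated_by {U. cf T le U \<or> ci T le U})"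
    using T by (rule arg_cong)
  then have "generate_topology_on {U. cf T le U \<or> ci T le U} W"
    using W openin_topology_generated_by_iff by metis
  then show ?thesis
  proof (induction rule: generate_topology_on.induct)
    case Empty
    then show ?case by simp
  next
    case (Int a b)
    show ?case
    proof
      fix x assume "x \<in> a \<inter> b"
      then obtain u D u' D' where "cf T le u" "ci T le D" "x \<in> u" "x \<in> D" "u \<inter> D \<subseteq> a"
        "cf T le u'" "ci T le D'" "x \<in> u'" "x \<in> D'" "u' \<inter> D' \<subseteq> b"
        using Int.IH by (meson IntD1 IntD2)
      then show "\<exists>u D. cf T le u \<and> ci T le D \<and> x \<in> u \<and> x \<in> D \<and> u \<inter> D \<subseteq> a \<inter> b"
        by (intro exI[of _ "u \<inter> u'"] exI[of _ "D \<inter> D'"]) (auto intro: cf_Int ci_Int)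
    qed
  next
    case (UN K)
    then show ?case by (meson UnionE Union_upper subset_trans)
  next
    case (Basis s)
    show ?case
    proof
      fix x assume x: "x \<in> s"
      from Basis consider "cf T le s" | "ci T le s" by blast
      then show "\<exists>u D. cf T le u \<and> ci T le D \<and> x \<in> u \<and> x \<in> D \<and> u \<inter> D \<subseteq> s"
      proof cases
        case 1
        then show ?thesis using x ci_top cf_sub[OF 1] by (intro exI[of _ s] exI[of _ "topspace T"]) auto
      next
        case 2
        then have "s \<subseteq> topspace T" by (simp add: clopen_initial_def initial_segment_def)
        then show ?thesis using x cf_top 2 by (intro exI[of _ "topspace T"] exI[of _ s]) auto
      qed
    qed
  qed
qed

context
  fixes T :: "'a topology" and le and \<phi>
  assumes phi: "\<phi> \<in> dual_star_star T le"
begin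

definition "Phi u = \<phi> (chr (topspace T) u)"

lemma phi_props:
  "\<phi> \<in> extensional (dual_star T le)"
  "continuous_map (dual_star_top T le) (discrete_topology UNIV) \<phi>"
  "\<And>f g. f \<in> dual_star T le \<Longrightarrow> g \<in> dual_star T le \<Longrightarrow> \<phi> (\<lambda>x\<in>topspace T. f x \<and> g x) = (\<phi> f \<and> \<phi> g)"
  "\<And>f g. f \<in> dual_star T le \<Longrightarrow> g \<in> dual_star T le \<Longrightarrow> \<phi> (\<lambda>x\<in>topspace T. f x \<or> g x) = (\<phi> f \<or> \<phi> g)"
  "\<phi> (\<lambda>x\<in>topspace T. False) = False" "\<phi> (\<lambda>x\<in>topspace T. True) = True"
  using phi by (auto simp: dual_star_star_def Let_def)

lemma Phi_Int: "cf T le u \<Longrightarrow> cf T le v \<Longrightarrow> Phi (u \<inter> v) = (Phi u \<and> Phi v)"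
  unfolding Phi_def using phi_props(3)[OF chr_DS chr_DS, of u v] by (simp add: chr_Int)

lemma Phi_Un: "cf T le u \<Longrightarrow> cf T le v \<Longrightarrow> Phi (u \<union> v) = (Phi u \<or> Phi v)"
  unfolding Phi_def using phi_props(4)[OF chr_DS chr_DS, of u v] by (simp add: chr_Un)

lemma Phi_empty: "\<not> Phi {}"
  unfolding Phi_def using phi_props(5) by (simp add: chr_empty)

lemma Phi_top: "Phi (topspace T)"
  unfolding Phi_def using phi_props(6) by (simp add: chr_top)

lemma P1: "finite A \<Longrightarrow> (\<forall>v. cf T le v \<and> A \<subseteq> v \<longrightarrow> Phi v) \<Longrightarrow> \<exists>a\<in>A. \<forall>v. cf T le v \<and> a \<in> v \<longrightarrow> Phi v"
proof (induction A rule: finite_induct)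
  case empty
  then show ?case using Phi_empty cf_empty by blast
next
  case (insert a A)
  show ?case
  proof (cases "\<forall>v. cf T le v \<and> a \<in> v \<longrightarrow> Phi v")
    case True then show ?thesis by blast
  next
    case False
    then obtain v0 where v0: "cf T le v0" "a \<in> v0" "\<not> Phi v0" by blast
    have "\<forall>v. cf T le v \<and> A \<subseteq> v \<longrightarrow> Phi v"
    proof (intro allI impI)
      fix v assume v: "cf T le v \<and> A \<subseteq> v"
      then have "Phi (v \<union> v0)" using insert.prems v0 cf_Un by blast
      then show "Phi v" using Phi_Un v v0 by blast
    qed
    then show ?thesis using insert.IH by blast
  qed
qed

lemma P2: "finite D \<Longrightarrow> (\<forall>v. cf T le v \<and> v \<inter> D = {} \<longrightarrow> \<not> Phi v) \<Longrightarrow> \<exists>d\<in>D. \<forall>v. cf T le v \<and> Phi v \<longrightarrow> d \<in> v"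
proof (induction D rule: finite_induct)
  case empty
  then show ?case using Phi_top cf_top by blast
next
  case (insert a A)
  show ?case
  proof (cases "\<forall>v. cf T le v \<and> Phi v \<longrightarrow> a \<in> v")
    case True then show ?thesis by blast
  next
    case False
    then obtain v0 where v0: "cf T le v0" "a \<notin> v0" "Phi v0" by blast
    have "\<forall>v. cf T le v \<and> v \<inter> A = {} \<longrightarrow> \<not> Phi v"
    proof (intro allI impI)
      fix v assume v: "cf T le v \<and> v \<inter> A = {}"
      then have "\<not> Phi (v \<inter> v0)" using insert.prems v0 cf_Int by blast
      then show "\<not> Phi v" using Phi_Int v v0 by blast
    qed
    then show ?thesis using insert.IH by blast
  qed
qed

lemma nbhd:
  assumes "f \<in> dual_star T le" "\<phi> f = b"
  shows "\<exists>F. finite F \<and> F \<subseteq> topspace T \<and> (\<forall>g\<in>dual_star T le. (\<forall>i\<in>F. g i = f i) \<longrightarrow> \<phi> g = b)"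
proof -
  have "continuous_map (dual_star_top T le) (discrete_topology UNIV) \<phi>" by (rule phi_props(2))
  then have "openin (dual_star_top T le) {g\<in>topspace (dual_star_top T le). \<phi> g \<in> {b}}"
    by (rule openin_continuous_map_preimage) simp
  then obtain W where W: "openin (powL (topspace T)) W" "{g\<in>dual_star T le. \<phi> g = b} = W \<inter> dual_star T le"
    unfolding topspace_DS by (auto simp: dual_star_top_def openin_subtopology)
  have "f \<in> W" using W(2) assms by blast
  have "\<forall>x\<in>W. \<exists>U. finite {i \<in> topspace T. U i \<noteq> topspace (discrete_topology (UNIV::bool set))} \<and>
                 (\<forall>i \<in> topspace T. openin (discrete_topology UNIV) (U i)) \<and> x \<in> Pi\<^sub>E (topspace T) U \<and> Pi\<^sub>E (topspace T) U \<subseteq> W"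
    using W(1) by (simp only: openin_product_topology_alt)
  then obtain U where U0: "finite {i \<in> topspace T. U i \<noteq> topspace (discrete_topology (UNIV::bool set))}"
     "f \<in> PiE (topspace T) U" "PiE (topspace T) U \<subseteq> W"
    using \<open>f \<in> W\<close> by blast
  then have U: "finite {i \<in> topspace T. U i \<noteq> UNIV}" "f \<in> PiE (topspace T) U" "PiE (topspace T) U \<subseteq> W"
    by simp_all
  show ?thesis
  proof (intro exI conjI ballI impI)
    show "finite {i \<in> topspace T. U i \<noteq> UNIV}" by (rule U(1))
    show "{i \<in> topspace T. U i \<noteq> UNIV} \<subseteq> topspace T" by auto
    fix g assume g: "g \<in> dual_star T le" "\<forall>i\<in>{i \<in> topspace T. U i \<noteq> UNIV}. g i = f i"
    have "g \<in> PiE (topspace T) U"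
    proof -
      have "g \<in> extensional (topspace T)" using g(1) by (simp add: dual_star_def)
      moreover have "\<forall>i\<in>topspace T. g i \<in> U i"
      proof
        fix i assume i: "i \<in> topspace T"
        show "g i \<in> U i"
        proof (cases "U i = UNIV")
          case False
          then have "g i = f i" using g(2) i by blast
          then show ?thesis using U(2) i by (simp add: PiE_iff)
        qed simp
      qed
      ultimately show ?thesis by (simp add: PiE_iff)
    qed
    then have "g \<in> W \<inter> dual_star T le" using U(3) g(1) by blast
    then show "\<phi> g = b" using W(2) by blast
  qed
qed

lemma L1:
  assumes u: "cf T le u" "Phi u"
  shows "\<exists>a\<in>u. \<forall>v. cf T le v \<and> a \<in> v \<longrightarrow> Phi v"
proof -
  obtain F where F: "finite F" "F \<subseteq> topspace T"
    "\<forall>g\<in>dual_star T le. (\<forall>i\<in>F. g i = chr (topspace T) u i) \<longrightarrow> \<phi> g = True"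
    using nbhd[OF chr_DS[OF u(1)], of True] u(2) unfolding Phi_def by blast
  have "\<forall>v. cf T le v \<and> F \<inter> u \<subseteq> v \<longrightarrow> Phi v"
  proof (intro allI impI)
    fix v assume v: "cf T le v \<and> F \<inter> u \<subseteq> v"
    have "\<forall>i\<in>F. chr (topspace T) (v \<inter> u) i = chr (topspace T) u i"
      using v by (auto simp: chr_def)
    then have "Phi (v \<inter> u)" using F(3) chr_DS[OF cf_Int[of T le v u]] v u(1) unfolding Phi_def by blast
    then show "Phi v" using Phi_Int v u(1) by blast
  qed
  then obtain a where "a \<in> F \<inter> u" "\<forall>v. cf T le v \<and> a \<in> v \<longrightarrow> Phi v"
    using P1[of "F \<inter> u"] F(1) by blast
  then show ?thesis by blast
qed

lemma L2:
  assumes u: "cf T le u" "\<not> Phi u"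
  shows "\<exists>d\<in>topspace T - u. \<forall>v. cf T le v \<and> Phi v \<longrightarrow> d \<in> v"
proof -
  obtain F where F: "finite F" "F \<subseteq> topspace T"
    "\<forall>g\<in>dual_star T le. (\<forall>i\<in>F. g i = chr (topspace T) u i) \<longrightarrow> \<phi> g = False"
    using nbhd[OF chr_DS[OF u(1)], of False] u(2) unfolding Phi_def by blast
  have "\<forall>v. cf T le v \<and> v \<inter> (F - u) = {} \<longrightarrow> \<not> Phi v"
  proof (intro allI impI)
    fix v assume v: "cf T le v \<and> v \<inter> (F - u) = {}"
    have "\<forall>i\<in>F. chr (topspace T) (v \<union> u) i = chr (topspace T) u i"
      using v F(2) by (auto simp: chr_def)
    then have "\<not> Phi (v \<union> u)" using F(3) chr_DS[OF cf_Un[of T le v u]] v u(1) unfolding Phi_def by blast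
    then show "\<not> Phi v" using Phi_Un v u(1) by blast
  qed
  then obtain d where "d \<in> F - u" "\<forall>v. cf T le v \<and> Phi v \<longrightarrow> d \<in> v"
    using P2[of "F - u"] F(1) by blast
  then show ?thesis using F(2) by blast
qed


lemma represent:
  assumes ts: "two_separated T le"
    and sep: "\<forall>B C. closedin T B \<and> final_segment (topspace T) le B \<and>
           closedin T C \<and> initial_segment (topspace T) le C \<and>
           (\<forall>x\<in>C. \<forall>y\<in>B. le x y \<and> x \<noteq> y) \<longrightarrow>
           (\<exists>u. clopen_final T le u \<and> B \<subseteq> u \<and> C \<inter> u = {})"
  shows "\<exists>x\<in>topspace T. \<phi> = evaluation T le x"
proof -
  define Cp where "Cp = {a\<in>topspace T. \<forall>v. cf T le v \<and> a \<in> v \<longrightarrow> Phi v}"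
  define Bp where "Bp = {d\<in>topspace T. \<forall>v. cf T le v \<and> Phi v \<longrightarrow> d \<in> v}"
  have "Bp \<inter> Cp \<noteq> {}"
  proof
    assume dis: "Bp \<inter> Cp = {}"
    have "Bp = \<Inter>({topspace T} \<union> {v. cf T le v \<and> Phi v})"
      unfolding Bp_def using cf_sub by blast
    then have cB: "closedin T Bp"
      by (metis (no_types, lifting) Un_iff closedin_Inter closedin_topspace clopen_final_def
          insert_not_empty mem_Collect_eq singletonD sup_eq_bot_iff)
    have fB: "final_segment (topspace T) le Bp"
      unfolding final_segment_def Bp_def clopen_final_def by blast
    have "Cp = \<Inter>({topspace T} \<union> {topspace T - v | v. cf T le v \<and> \<not> Phi v})"
      unfolding Cp_def by blast
    moreover have "closedin T (\<Inter>({topspace T} \<union> {topspace T - v | v. cf T le v \<and> \<not> Phi v}))"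
      by (rule closedin_Inter) (auto intro: closedin_diff simp: clopen_final_def)
    ultimately have cC: "closedin T Cp" by simp
    have iC: "initial_segment (topspace T) le Cp"
      unfolding initial_segment_def Cp_def clopen_final_def final_segment_def by blast
    have lt: "\<forall>x\<in>Cp. \<forall>y\<in>Bp. le x y \<and> x \<noteq> y"
    proof (intro ballI conjI)
      fix a d assume a: "a \<in> Cp" and d: "d \<in> Bp"
      show "le a d" using le2[OF ts, of a d] a d unfolding Cp_def Bp_def by blast
      show "a \<noteq> d" using a d dis by blast
    qed
    obtain u where u: "cf T le u" "Bp \<subseteq> u" "Cp \<inter> u = {}"
      using sep cB fB cC iC lt by blast
    show False
    proof (cases "Phi u")
      case True
      then obtain a where "a \<in> u" "\<forall>v. cf T le v \<and> a \<in> v \<longrightarrow> Phi v" using L1 u(1) by blast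
      then have "a \<in> Cp" unfolding Cp_def using cf_sub[OF u(1)] by blast
      then show False using u(3) \<open>a \<in> u\<close> by blast
    next
      case False
      then obtain d where "d \<in> topspace T - u" "\<forall>v. cf T le v \<and> Phi v \<longrightarrow> d \<in> v" using L2 u(1) by blast
      then have "d \<in> Bp" unfolding Bp_def by blast
      then show False using u(2) \<open>d \<in> topspace T - u\<close> by blast
    qed
  qed
  then obtain x where xB: "x \<in> Bp" and xC: "x \<in> Cp" by blast
  have xP: "x \<in> topspace T" using xB Bp_def by blast
  have "\<phi> = evaluation T le x"
  proof
    fix f
    show "\<phi> f = evaluation T le x f"
    proof (cases "f \<in> dual_star T le")
      case True
      have "\<phi> f = Phi {z\<in>topspace T. f z}" unfolding Phi_def using DS_chr(2)[OF True] by simp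
      also have "\<dots> = (x \<in> {z\<in>topspace T. f z})"
        using xB xC DS_chr(1)[OF True] unfolding Bp_def Cp_def by blast
      also have "\<dots> = f x" using xP by simp
      finally show ?thesis using True by (simp add: evaluation_def)
    next
      case False
      then show ?thesis using phi_props(1) by (simp add: evaluation_def extensional_def)
    qed
  qed
  then show ?thesis using xP by blast
qed

end


lemma DS_sub: "dual_star T le \<subseteq> topspace (powL (topspace T))"
  by (auto simp: dual_star_def PiE_def)

lemma open_coord:
  assumes "c \<in> topspace T"
  shows "openin (powL (topspace T)) {g\<in>topspace (powL (topspace T)). g c \<in> {b}}"
  by (rule openin_continuous_map_preimage[OF continuous_map_product_projection[OF assms]]) simp

lemma openin_sub_helper: "openin X W \<Longrightarrow> openin (subtopology X S) (W \<inter> S)"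
  unfolding openin_subtopology by blast

lemma aux_set: "S \<subseteq> X \<Longrightarrow> {f\<in>S. \<exists>c\<in>C. f c \<in> Q} = (\<Union>c\<in>C. {g\<in>X. g c \<in> Q}) \<inter> S"
  by blast

context
  fixes T :: "'a topology" and le B C
  assumes B: "closedin T B" "final_segment (topspace T) le B"
    and C: "closedin T C" "initial_segment (topspace T) le C"
    and lt: "\<forall>x\<in>C. \<forall>y\<in>B. le x y \<and> x \<noteq> y"
    and ns: "\<not> (\<exists>u. clopen_final T le u \<and> B \<subseteq> u \<and> C \<inter> u = {})"
begin

lemma BP: "B \<subseteq> topspace T" using B by (simp add: closedin_subset)
lemma CP: "C \<subseteq> topspace T" using C by (simp add: closedin_subset)

lemma Bne: "B \<noteq> {}"
proof
  assume "B = {}"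
  then show False using ns cf_empty[of T le] by blast
qed

lemma Cne: "C \<noteq> {}"
proof
  assume "C = {}"
  then show False using ns cf_top[of T le] BP by blast
qed

lemma key: "f \<in> dual_star T le \<Longrightarrow> (B \<subseteq> {x\<in>topspace T. f x}) \<longleftrightarrow> (\<exists>c\<in>C. f c)"
proof
  assume f: "f \<in> dual_star T le"
  show "B \<subseteq> {x\<in>topspace T. f x} \<Longrightarrow> \<exists>c\<in>C. f c"
  proof (rule ccontr)
    assume a: "B \<subseteq> {x\<in>topspace T. f x}" "\<not> (\<exists>c\<in>C. f c)"
    then have "C \<inter> {x\<in>topspace T. f x} = {}" by blast
    then show False using ns DS_chr(1)[OF f] a(1) by blast
  qed
  show "\<exists>c\<in>C. f c \<Longrightarrow> B \<subseteq> {x\<in>topspace T. f x}"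
  proof
    fix b assume "\<exists>c\<in>C. f c" "b \<in> B"
    then obtain c where c: "c \<in> C" "f c" by blast
    have m: "\<forall>x\<in>topspace T. \<forall>y\<in>topspace T. le x y \<longrightarrow> f x \<le> f y" using f unfolding dual_star_def by blast
    have "le c b" using lt c \<open>b \<in> B\<close> by blast
    then have "f c \<le> f b" using m c \<open>b \<in> B\<close> BP CP by blast
    then show "b \<in> {x\<in>topspace T. f x}" using c \<open>b \<in> B\<close> BP by (auto simp: le_bool_def)
  qed
qed

definition "phi0 = (\<lambda>f\<in>dual_star T le. \<exists>c\<in>C. f c)"

lemma meetDS: "f \<in> dual_star T le \<Longrightarrow> g \<in> dual_star T le \<Longrightarrow> (\<lambda>x\<in>topspace T. f x \<and> g x) \<in> dual_star T le"
proof -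
  assume f: "f \<in> dual_star T le" and g: "g \<in> dual_star T le"
  have "(\<lambda>x\<in>topspace T. f x \<and> g x) = chr (topspace T) ({x\<in>topspace T. f x} \<inter> {x\<in>topspace T. g x})"
    by (auto simp: chr_def fun_eq_iff)
  then show "(\<lambda>x\<in>topspace T. f x \<and> g x) \<in> dual_star T le"
    using chr_DS[OF cf_Int[OF DS_chr(1)[OF f] DS_chr(1)[OF g]]] by simp
qed

lemma joinDS: "f \<in> dual_star T le \<Longrightarrow> g \<in> dual_star T le \<Longrightarrow> (\<lambda>x\<in>topspace T. f x \<or> g x) \<in> dual_star T le"
proof -
  assume f: "f \<in> dual_star T le" and g: "g \<in> dual_star T le"
  have "(\<lambda>x\<in>topspace T. f x \<or> g x) = chr (topspace T) ({x\<in>topspace T. f x} \<union> {x\<in>topspace T. g x})"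
    by (auto simp: chr_def fun_eq_iff)
  then show "(\<lambda>x\<in>topspace T. f x \<or> g x) \<in> dual_star T le"
    using chr_DS[OF cf_Un[OF DS_chr(1)[OF f] DS_chr(1)[OF g]]] by simp
qed

lemma fDS: "(\<lambda>x\<in>topspace T. False) \<in> dual_star T le" using chr_DS[OF cf_empty, of T le] by (simp add: chr_empty)
lemma tDS: "(\<lambda>x\<in>topspace T. True) \<in> dual_star T le" using chr_DS[OF cf_top, of T le] by (simp add: chr_top)

lemma o1: "openin (dual_star_top T le) {f\<in>topspace (dual_star_top T le). phi0 f}"
proof -
  have "{f\<in>topspace (dual_star_top T le). phi0 f} = {f\<in>dual_star T le. \<exists>c\<in>C. f c \<in> {True}}"
    unfolding topspace_DS
  proof (rule Collect_cong)
    fix f show "(f \<in> dual_star T le \<and> phi0 f) = (f \<in> dual_star T le \<and> (\<exists>c\<in>C. f c \<in> {True}))"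
    proof (cases "f \<in> dual_star T le")
      case True
      then have "phi0 f = (\<exists>c\<in>C. f c)" unfolding phi0_def by (rule restrict_apply')
      then show ?thesis using True by blast
    qed blast
  qed
  also have "\<dots> = (\<Union>c\<in>C. {g\<in>topspace (powL (topspace T)). g c \<in> {True}}) \<inter> dual_star T le"
    by (rule aux_set[OF DS_sub])
  finally have eq: "{f\<in>topspace (dual_star_top T le). phi0 f} = (\<Union>c\<in>C. {g\<in>topspace (powL (topspace T)). g c \<in> {True}}) \<inter> dual_star T le" .
  have op: "openin (powL (topspace T)) (\<Union>c\<in>C. {g\<in>topspace (powL (topspace T)). g c \<in> {True}})"
  proof (rule openin_Union)
    fix S assume "S \<in> (\<lambda>c. {g\<in>topspace (powL (topspace T)). g c \<in> {True}}) ` C"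
    then obtain z where z: "z \<in> C" "S = {g\<in>topspace (powL (topspace T)). g z \<in> {True}}" by blast
    have "z \<in> topspace T" using z(1) CP by blast
    then show "openin (powL (topspace T)) S" unfolding z(2) by (rule open_coord)
  qed
  have eq': "{f\<in>topspace (subtopology (powL (topspace T)) (dual_star T le)). phi0 f} = (\<Union>c\<in>C. {g\<in>topspace (powL (topspace T)). g c \<in> {True}}) \<inter> dual_star T le"
    using eq unfolding dual_star_top_def .
  show ?thesis unfolding dual_star_top_def eq' by (rule openin_sub_helper[OF op])
qed

lemma o2: "openin (dual_star_top T le) {f\<in>topspace (dual_star_top T le). \<not> phi0 f}"
proof -
  have k: "(\<not> (\<exists>c\<in>C. f c)) \<longleftrightarrow> (\<exists>b\<in>B. f b \<in> {False})" if f: "f \<in> dual_star T le" for f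
  proof -
    have "(\<not> (\<exists>c\<in>C. f c)) \<longleftrightarrow> \<not> B \<subseteq> {x\<in>topspace T. f x}" using key[OF f] by blast
    also have "\<dots> \<longleftrightarrow> (\<exists>b\<in>B. f b \<in> {False})" using BP by blast
    finally show ?thesis .
  qed
  have "{f\<in>topspace (dual_star_top T le). \<not> phi0 f} = {f\<in>dual_star T le. \<exists>b\<in>B. f b \<in> {False}}"
    unfolding topspace_DS
  proof (rule Collect_cong)
    fix f show "(f \<in> dual_star T le \<and> \<not> phi0 f) = (f \<in> dual_star T le \<and> (\<exists>b\<in>B. f b \<in> {False}))"
    proof (cases "f \<in> dual_star T le")
      case True
      then have "phi0 f = (\<exists>c\<in>C. f c)" unfolding phi0_def by (rule restrict_apply')
      then show ?thesis using True k[OF True] by blast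
    qed blast
  qed
  also have "\<dots> = (\<Union>b\<in>B. {g\<in>topspace (powL (topspace T)). g b \<in> {False}}) \<inter> dual_star T le"
    by (rule aux_set[OF DS_sub])
  finally have eq: "{f\<in>topspace (dual_star_top T le). \<not> phi0 f} = (\<Union>b\<in>B. {g\<in>topspace (powL (topspace T)). g b \<in> {False}}) \<inter> dual_star T le" .
  have op: "openin (powL (topspace T)) (\<Union>b\<in>B. {g\<in>topspace (powL (topspace T)). g b \<in> {False}})"
  proof (rule openin_Union)
    fix S assume "S \<in> (\<lambda>b. {g\<in>topspace (powL (topspace T)). g b \<in> {False}}) ` B"
    then obtain z where z: "z \<in> B" "S = {g\<in>topspace (powL (topspace T)). g z \<in> {False}}" by blast
    have "z \<in> topspace T" using z(1) BP by blast
    then show "openin (powL (topspace T)) S" unfolding z(2) by (rule open_coord)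
  qed
  have eq': "{f\<in>topspace (subtopology (powL (topspace T)) (dual_star T le)). \<not> phi0 f} = (\<Union>b\<in>B. {g\<in>topspace (powL (topspace T)). g b \<in> {False}}) \<inter> dual_star T le"
    using eq unfolding dual_star_top_def .
  show ?thesis unfolding dual_star_top_def eq' by (rule openin_sub_helper[OF op])
qed

lemma phi0_meet: "f \<in> dual_star T le \<Longrightarrow> g \<in> dual_star T le \<Longrightarrow>
   phi0 (\<lambda>x\<in>topspace T. f x \<and> g x) = (phi0 f \<and> phi0 g)"
proof -
  assume f: "f \<in> dual_star T le" and g: "g \<in> dual_star T le"
  have "phi0 (\<lambda>x\<in>topspace T. f x \<and> g x) = (B \<subseteq> {x\<in>topspace T. (\<lambda>x\<in>topspace T. f x \<and> g x) x})"
    using key[OF meetDS[OF f g]] meetDS[OF f g] unfolding phi0_def by simp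
  also have "\<dots> = (B \<subseteq> {x\<in>topspace T. f x} \<and> B \<subseteq> {x\<in>topspace T. g x})" by auto
  also have "\<dots> = (phi0 f \<and> phi0 g)" using key[OF f] key[OF g] f g unfolding phi0_def by simp
  finally show ?thesis .
qed

lemma phi0_join: "f \<in> dual_star T le \<Longrightarrow> g \<in> dual_star T le \<Longrightarrow>
   phi0 (\<lambda>x\<in>topspace T. f x \<or> g x) = (phi0 f \<or> phi0 g)"
  using joinDS CP unfolding phi0_def by auto

lemma phi0_in: "phi0 \<in> dual_star_star T le"
  unfolding dual_star_star_def Let_def
proof (intro CollectI conjI ballI)
  show "phi0 \<in> extensional (dual_star T le)" by (simp add: phi0_def)
  show "continuous_map (dual_star_top T le) (discrete_topology UNIV) phi0"
    by (rule cont_bool[OF o1 o2])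
  have "phi0 (\<lambda>x\<in>topspace T. False) = (\<exists>c\<in>C. (\<lambda>x\<in>topspace T. False) c)"
    unfolding phi0_def by (rule restrict_apply'[OF fDS])
  then show "phi0 (\<lambda>x\<in>topspace T. False) = False" by (simp add: subsetD[OF CP])
  obtain c where c: "c \<in> C" using Cne by blast
  then have cP: "c \<in> topspace T" using CP by blast
  have "phi0 (\<lambda>x\<in>topspace T. True) = (\<exists>c\<in>C. (\<lambda>x\<in>topspace T. True) c)"
    unfolding phi0_def by (rule restrict_apply'[OF tDS])
  also have "\<dots>" using c cP by (intro bexI[of _ c]) simp_all
  finally show "phi0 (\<lambda>x\<in>topspace T. True) = True" by simp
qed (auto simp: phi0_meet phi0_join)

lemma dir1_false:
  assumes H: "\<forall>W. openin T W \<longrightarrow> (\<forall>x\<in>W. \<exists>u D. cf T le u \<and> ci T le D \<and> x \<in> u \<and> x \<in> D \<and> u \<inter> D \<subseteq> W)"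
    and refl: "reflexive_tposet T le"
  shows False
proof -
  obtain x where xP: "x \<in> topspace T" and ev: "phi0 = evaluation T le x"
    using refl phi0_in unfolding reflexive_tposet_def by blast
  have E: "(x \<in> v) = (\<exists>c\<in>C. c \<in> v)" if v: "cf T le v" for v
  proof -
    have "phi0 (chr (topspace T) v) = evaluation T le x (chr (topspace T) v)" using ev by simp
    moreover have "phi0 (chr (topspace T) v) = (\<exists>c\<in>C. chr (topspace T) v c)"
      unfolding phi0_def using chr_DS[OF v] by simp
    moreover have "(\<exists>c\<in>C. chr (topspace T) v c) = (\<exists>c\<in>C. c \<in> v)"
      by (simp add: chr_def subsetD[OF CP])
    moreover have "evaluation T le x (chr (topspace T) v) = chr (topspace T) v x"
      unfolding evaluation_def by (rule restrict_apply'[OF chr_DS[OF v]])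
    moreover have "chr (topspace T) v x = (x \<in> v)" by (simp add: chr_def xP)
    ultimately show "(x \<in> v) = (\<exists>c\<in>C. c \<in> v)" by simp
  qed
  have E2: "(x \<in> v) = (B \<subseteq> v)" if v: "cf T le v" for v
  proof -
    have "B \<subseteq> v \<longleftrightarrow> B \<subseteq> {z\<in>topspace T. chr (topspace T) v z}" using BP by (auto simp: chr_def)
    also have "\<dots> \<longleftrightarrow> (\<exists>c\<in>C. chr (topspace T) v c)" by (rule key[OF chr_DS[OF v]])
    also have "\<dots> \<longleftrightarrow> (\<exists>c\<in>C. c \<in> v)" using CP by (auto simp: chr_def)
    finally show "(x \<in> v) = (B \<subseteq> v)" using E[OF v] by simp
  qed
  show False
  proof (cases "x \<in> B")
    case False
    have "openin T (topspace T - B)" using B(1) by (simp add: closedin_def)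
    then obtain u D where uD: "cf T le u" "ci T le D" "x \<in> u" "x \<in> D" "u \<inter> D \<subseteq> topspace T - B"
      using H xP False by blast
    have "B \<subseteq> u" using E2[OF uD(1)] uD(3) by simp
    then have "B \<subseteq> topspace T - D" using uD(5) BP by blast
    then have "x \<in> topspace T - D" using E2[OF cf_compl[OF uD(2)]] by simp
    then show False using uD(4) by blast
  next
    case True
    then have "x \<notin> C" using lt by blast
    have "openin T (topspace T - C)" using C(1) by (simp add: closedin_def)
    then obtain u D where uD: "cf T le u" "ci T le D" "x \<in> u" "x \<in> D" "u \<inter> D \<subseteq> topspace T - C"
      using H xP \<open>x \<notin> C\<close> by blast
    obtain c where c: "c \<in> C" "c \<in> u" using E[OF uD(1)] uD(3) by blast
    then have "c \<in> topspace T - D" using uD(5) CP by blast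
    then have "x \<in> topspace T - D" using E[OF cf_compl[OF uD(2)]] c(1) by blast
    then show False using uD(4) by blast
  qed
qed

end

lemma dir1:
  assumes H: "\<forall>W. openin T W \<longrightarrow> (\<forall>x\<in>W. \<exists>u D. cf T le u \<and> ci T le D \<and> x \<in> u \<and> x \<in> D \<and> u \<inter> D \<subseteq> W)"
    and refl: "reflexive_tposet T le"
    and B: "closedin T B" "final_segment (topspace T) le B"
    and C: "closedin T C" "initial_segment (topspace T) le C"
    and lt: "\<forall>x\<in>C. \<forall>y\<in>B. le x y \<and> x \<noteq> y"
  shows "\<exists>u. clopen_final T le u \<and> B \<subseteq> u \<and> C \<inter> u = {}"
  using dir1_false[OF B C lt _ H refl] by blast

theorem mainTheorem15:
  fixes T :: "'a topology" and le :: "'a \<Rightarrow> 'a \<Rightarrow> bool"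
  assumes "topological_poset T le"
    and "two_separated T le"
    and "T = topology_generated_by {U. clopen_final T le U \<or> clopen_initial T le U}"
  shows "reflexive_tposet T le \<longleftrightarrow>
    (\<forall>B C. closedin T B \<and> final_segment (topspace T) le B \<and>
           closedin T C \<and> initial_segment (topspace T) le C \<and>
           (\<forall>x\<in>C. \<forall>y\<in>B. le x y \<and> x \<noteq> y) \<longrightarrow>
           (\<exists>u. clopen_final T le u \<and> B \<subseteq> u \<and> C \<inter> u = {}))"
proof
  assume r: "reflexive_tposet T le"
  have H: "\<forall>W. openin T W \<longrightarrow> (\<forall>x\<in>W. \<exists>u D. cf T le u \<and> ci T le D \<and> x \<in> u \<and> x \<in> D \<and> u \<inter> D \<subseteq> W)"
    using subbase[OF assms(3)] by blast
  show "\<forall>B C. closedin T B \<and> final_segment (topspace T) le B \<and>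
           closedin T C \<and> initial_segment (topspace T) le C \<and>
           (\<forall>x\<in>C. \<forall>y\<in>B. le x y \<and> x \<noteq> y) \<longrightarrow>
           (\<exists>u. clopen_final T le u \<and> B \<subseteq> u \<and> C \<inter> u = {})"
    using dir1[OF H r] by blast
next
  assume s: "\<forall>B C. closedin T B \<and> final_segment (topspace T) le B \<and>
           closedin T C \<and> initial_segment (topspace T) le C \<and>
           (\<forall>x\<in>C. \<forall>y\<in>B. le x y \<and> x \<noteq> y) \<longrightarrow>
           (\<exists>u. clopen_final T le u \<and> B \<subseteq> u \<and> C \<inter> u = {})"
  show "reflexive_tposet T le"
    unfolding reflexive_tposet_def
  proof
    fix \<phi> assume "\<phi> \<in> dual_star_star T le"
    then show "\<phi> \<in> evaluation T le ` topspace T"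
      using represent[OF _ assms(2) s] by blast
  qed
qed

end
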